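(* Let $n\ge1$, let $a,b$ be positive integers, and let $G$ be a multigraph on $V=\{0,1,\ldots,n\}$ obtained from the complete multigraph $K_{n+1}^{a,b}$ by deleting some (possibly none) of the edges incident to the root $0$; i.e. $G$ has adjacency matrix $[a_{ij}]$ with $a_{0i}=a_{i0}=a_i$ for integers $0\le a_i\le a$ ($i\in[n]$), $a_{ij}=b$ for distinct $i,j\in[n]$, and $a_{ii}=0$. Then $$\dim_{\mathbb K}\left(R_n/\mathcal{M}_G^{(1)}\right)=\det\widetilde Q_G.$$
   Context: $\mathbb K$ is a field, $R_n=\mathbb K[x_1,\ldots,x_n]$. The complete multigraph $K_{n+1}^{a,b}$ on $V$ has $a$ edges between $0$ and each $i\in[n]$ and $b$ edges between each pair of distinct $i,j\in[n]$, no loops. For a loopless multigraph $G$ on $V$ with adjacency matrix $[a_{ij}]$ and $\emptyset\ne A\subseteq[n]$, put $d_A(i)=\sum_{j\in V\setminus A}a_{ij}$ for $i\in A$, $m_A=\prod_{i\in A}x_i^{d_A(i)}$, and $\mathcal{M}_G^{(1)}=\langle m_A:\emptyset\ne A\subseteq[n],\ |A|\le2\rangle$ (explicitly generated by $x_i^{d_i}$ and $x_i^{d_i-a_{ij}}x_j^{d_j-a_{ij}}$ for $i\ne j$ in $[n]$, where $d_i=\sum_{j\in V}a_{ij}$). The truncated signless Laplace matrix $\widetilde Q_G$ is the $n\times n$ matrix indexed by $[n]$ with diagonal entries $d_i$ and off-diagonal entries $a_{ij}$. *)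

theory Defs
  imports "HOL-Library.Poly_Mapping" "Jordan_Normal_Form.Determinant"
begin

text \<open>Multivariate polynomials over a field: a polynomial is a finitely supported
  map from monomials (exponent vectors, nat =>0 nat, variable x_i has index i)
  to coefficients; multiplication is the convolution product of Poly_Mapping.\<close>

type_synonym 'k mpoly = "(nat \<Rightarrow>\<^sub>0 nat) \<Rightarrow>\<^sub>0 'k"

text \<open>R_n = K[x_1,...,x_n]: polynomials only involving the variables 1..n.\<close>
definition polyring :: "nat \<Rightarrow> 'k::field mpoly set" where
  "polyring n = {p. \<forall>m \<in> Poly_Mapping.keys p. Poly_Mapping.keys m \<subseteq> {1..n}}"

definition const :: "'k::field \<Rightarrow> 'k mpoly" where
  "const c = Poly_Mapping.single 0 c"

definition monom :: "(nat \<Rightarrow>\<^sub>0 nat) \<Rightarrow> 'k::field mpoly" where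
  "monom e = Poly_Mapping.single e 1"

inductive_set ideal_gen :: "nat \<Rightarrow> 'k::field mpoly set \<Rightarrow> 'k mpoly set"
  for n :: nat and S :: "'k mpoly set" where
  zero: "0 \<in> ideal_gen n S"
| gen: "g \<in> S \<Longrightarrow> g \<in> ideal_gen n S"
| add: "p \<in> ideal_gen n S \<Longrightarrow> q \<in> ideal_gen n S \<Longrightarrow> p + q \<in> ideal_gen n S"
| mult: "r \<in> polyring n \<Longrightarrow> p \<in> ideal_gen n S \<Longrightarrow> r * p \<in> ideal_gen n S"

text \<open>dim_K (R_n / I) = d: there is a set B of d polynomials of R_n whose residue
  classes form a K-basis of R_n / I (linearly independent modulo I and spanning modulo I).\<close>
definition quot_dim_eq :: "nat \<Rightarrow> 'k::field mpoly set \<Rightarrow> nat \<Rightarrow> bool" where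
  "quot_dim_eq n I d \<longleftrightarrow>
     (\<exists>B. finite B \<and> card B = d \<and> B \<subseteq> polyring n \<and>
        (\<forall>c. (\<Sum>b\<in>B. const (c b) * b) \<in> I \<longrightarrow> (\<forall>b\<in>B. c b = 0)) \<and>
        (\<forall>p \<in> polyring n. \<exists>c. p - (\<Sum>b\<in>B. const (c b) * b) \<in> I))"

text \<open>Multigraphs on V = {0..n} given by adjacency matrix adj (values only used on V).\<close>
definition degA :: "nat \<Rightarrow> (nat \<Rightarrow> nat \<Rightarrow> nat) \<Rightarrow> nat set \<Rightarrow> nat \<Rightarrow> nat" where
  "degA n adj A i = (\<Sum>j\<in>{0..n} - A. adj i j)"

definition mA :: "nat \<Rightarrow> (nat \<Rightarrow> nat \<Rightarrow> nat) \<Rightarrow> nat set \<Rightarrow> 'k::field mpoly" where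
  "mA n adj A = monom (\<Sum>i\<in>A. Poly_Mapping.single i (degA n adj A i))"

definition M1 :: "nat \<Rightarrow> (nat \<Rightarrow> nat \<Rightarrow> nat) \<Rightarrow> 'k::field mpoly set" where
  "M1 n adj = ideal_gen n {mA n adj A | A. A \<noteq> {} \<and> A \<subseteq> {1..n} \<and> card A \<le> 2}"

text \<open>Truncated signless Laplace matrix, indexed by [n]; row/column k of the
  matrix (0-based) corresponds to vertex k+1.\<close>
definition trunc_Q :: "nat \<Rightarrow> (nat \<Rightarrow> nat \<Rightarrow> nat) \<Rightarrow> int mat" where
  "trunc_Q n adj = mat n n (\<lambda>(k, l).
     if k = l then int (\<Sum>j\<in>{0..n}. adj (k+1) j) else int (adj (k+1) (l+1)))"

end

theory Submission
  imports Defs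
begin


definition Mt :: "nat \<Rightarrow> (nat \<Rightarrow> int) \<Rightarrow> int \<Rightarrow> int mat" where
  "Mt n t c = mat n n (\<lambda>(k,l). if k = l then t k + c else c)"

lemma det_Mt: "det (Mt n t c) = (\<Prod>k<n. t k) + c * (\<Sum>i<n. \<Prod>k\<in>{..<n}-{i}. t k)"
proof (induction n)
  case 0
  then show ?case by (simp add: Mt_def)
next
  case (Suc n)
  let ?A = "Mt (Suc n) t c"
  define a where "a = (\<lambda>i::nat. t n \<cdot>\<^sub>v unit_vec (Suc n) n)"
  define bb where "bb = (\<lambda>i::nat. vec (Suc n) (\<lambda>_. c))"
  define cc where "cc = (\<lambda>i. row ?A i)"
  have A: "?A = mat\<^sub>r (Suc n) (Suc n) (\<lambda>i. if i = n then a i + bb i else cc i)"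
    by (rule eq_matI, auto simp: Mt_def a_def bb_def cc_def unit_vec_def)
  have "det ?A = det (mat\<^sub>r (Suc n) (Suc n) (\<lambda>i. if i = n then a i else cc i)) +
     det (mat\<^sub>r (Suc n) (Suc n) (\<lambda>i. if i = n then bb i else cc i))"
    unfolding A by (rule det_row_add, auto simp: a_def bb_def cc_def Mt_def)
  also have "det (mat\<^sub>r (Suc n) (Suc n) (\<lambda>i. if i = n then a i else cc i)) = t n * det (Mt n t c)"
  proof -
    let ?A1 = "mat\<^sub>r (Suc n) (Suc n) (\<lambda>i. if i = n then a i else cc i)"
    have "det ?A1 = (\<Sum>j<Suc n. ?A1 $$ (n,j) * cofactor ?A1 n j)"
      by (rule laplace_expansion_row, auto)
    also have "\<dots> = (\<Sum>j<Suc n. if j = n then t n * cofactor ?A1 n n else 0)"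
      by (rule sum.cong, auto simp: a_def unit_vec_def)
    also have "\<dots> = t n * cofactor ?A1 n n" by simp
    also have "mat_delete ?A1 n n = Mt n t c"
      by (rule eq_matI, auto simp: mat_delete_def Mt_def cc_def)
    hence "cofactor ?A1 n n = det (Mt n t c)" unfolding cofactor_def by simp
    finally show ?thesis by simp
  qed
  also have "det (mat\<^sub>r (Suc n) (Suc n) (\<lambda>i. if i = n then bb i else cc i)) = c * (\<Prod>k<n. t k)"
  proof -
    let ?A2 = "mat\<^sub>r (Suc n) (Suc n) (\<lambda>i. if i = n then bb i else cc i)"
    define E :: "int mat" where "E = mat (Suc n) (Suc n) (\<lambda>(i,j). if i = j then 1 else if j = n then 1 else 0)"
    define N :: "int mat" where "N = mat (Suc n) (Suc n) (\<lambda>(i,j). if i = n then c else if i = j then t i else 0)"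
    have EN: "?A2 = E * N"
    proof (rule eq_matI)
      fix i j assume ij: "i < dim_row (E * N)" "j < dim_col (E * N)"
      hence i: "i < Suc n" and j: "j < Suc n" by (auto simp: E_def N_def)
      have "(E * N) $$ (i,j) = (\<Sum>m\<in>{0..<Suc n}. E $$ (i,m) * N $$ (m,j))"
        using i j by (simp add: E_def N_def scalar_prod_def)
      also have "\<dots> = (\<Sum>m\<in>{0..<Suc n}. (if m = i then N $$ (i,j) else 0) + (if m = n \<and> i \<noteq> n then N $$ (n,j) else 0))"
        using i j by (intro sum.cong, auto simp: E_def N_def)
      also have "\<dots> = N $$ (i,j) + (if i \<noteq> n then N $$ (n,j) else 0)"
        using i by (simp add: sum.distrib)
      also have "\<dots> = ?A2 $$ (i,j)"
        using i j by (auto simp: N_def bb_def cc_def Mt_def)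
      finally show "?A2 $$ (i,j) = (E * N) $$ (i,j)" by simp
    qed (auto simp: E_def N_def)
    have dE: "det E = 1"
    proof -
      have "det E = prod_list (diag_mat E)"
        by (rule det_upper_triangular[of _ "Suc n"], auto simp: E_def intro!: upper_triangularI)
      also have "\<dots> = 1" unfolding prod_list_diag_prod by (simp add: E_def)
      finally show ?thesis .
    qed
    have dN: "det N = c * (\<Prod>k<n. t k)"
    proof -
      have "det N = prod_list (diag_mat N)"
        by (rule det_lower_triangular[of "Suc n"], auto simp: N_def)
      also have "\<dots> = (\<Prod>i\<in>{0..<Suc n}. N $$ (i,i))" unfolding prod_list_diag_prod by (simp add: N_def)
      also have "\<dots> = N $$ (n,n) * (\<Prod>i\<in>{0..<n}. N $$ (i,i))"
        by (simp add: atLeast0LessThan)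
      also have "(\<Prod>i\<in>{0..<n}. N $$ (i,i)) = (\<Prod>k<n. t k)"
        by (simp add: atLeast0LessThan, rule prod.cong, auto simp: N_def)
      also have "N $$ (n,n) = c" by (simp add: N_def)
      finally show ?thesis .
    qed
    have "det (E * N) = det E * det N"
      by (rule det_mult[of _ "Suc n"], auto simp: E_def N_def)
    thus ?thesis unfolding EN dE dN by simp
  qed
  finally have "det ?A = t n * det (Mt n t c) + c * (\<Prod>k<n. t k)" .
  also have "\<dots> = (\<Prod>k<Suc n. t k) + c * (\<Sum>i<Suc n. \<Prod>k\<in>{..<Suc n}-{i}. t k)"
  proof -
    have s1: "(\<Prod>k\<in>{..<Suc n}-{n}. t k) = (\<Prod>k<n. t k)"
      by (rule prod.cong, auto)
    have s2: "(\<Prod>k\<in>{..<Suc n}-{i}. t k) = t n * (\<Prod>k\<in>{..<n}-{i}. t k)" if "i < n" for i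
    proof -
      have "{..<Suc n}-{i} = insert n ({..<n}-{i})" using that by auto
      thus ?thesis by simp
    qed
    have "(\<Sum>i<Suc n. \<Prod>k\<in>{..<Suc n}-{i}. t k) = (\<Sum>i<n. t n * (\<Prod>k\<in>{..<n}-{i}. t k)) + (\<Prod>k<n. t k)"
      by (simp add: s1 s2)
    thus ?thesis using Suc.IH by (simp add: algebra_simps sum_distrib_left)
  qed
  finally show ?case .
qed



lemma keys_monom[simp]: "Poly_Mapping.keys (monom e :: 'k::field mpoly) = {e}"
  by (simp add: monom_def)

lemma const_mult_monom[simp]: "const c * (monom e :: 'k::field mpoly) = Poly_Mapping.single e c"
  by (simp add: const_def monom_def mult_single)

lemma monom_inj: "inj (monom :: _ \<Rightarrow> 'k::field mpoly)"
proof (rule injI)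
  fix x y assume "(monom x :: 'k mpoly) = monom y"
  hence "Poly_Mapping.keys (monom x :: 'k mpoly) = Poly_Mapping.keys (monom y :: 'k mpoly)" by simp
  thus "x = y" by simp
qed

lemma ideal_keys_div:
  assumes "p \<in> ideal_gen n S" "\<forall>s\<in>S. \<exists>g\<in>G. s = monom g"
  shows "\<forall>m\<in>Poly_Mapping.keys p. \<exists>g\<in>G. \<forall>i. Poly_Mapping.lookup g i \<le> Poly_Mapping.lookup m i"
  using assms(1)
proof (induction rule: ideal_gen.induct)
  case zero
  then show ?case by simp
next
  case (gen g)
  then show ?case using assms(2) by fastforce
next
  case (add p q)
  then show ?case using keys_add[of p q] by blast
next
  case (mult r p)
  show ?case
  proof
    fix m assume "m \<in> Poly_Mapping.keys (r * p)"
    then obtain x y where m: "m = x + y" and y: "y \<in> Poly_Mapping.keys p"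
      using keys_mult[of r p] by blast
    from mult.IH y obtain g where "g \<in> G" "\<forall>i. Poly_Mapping.lookup g i \<le> Poly_Mapping.lookup y i" by blast
    thus "\<exists>g\<in>G. \<forall>i. Poly_Mapping.lookup g i \<le> Poly_Mapping.lookup m i"
      by (metis m lookup_add trans_le_add2)
  qed
qed

lemma single_in_ideal:
  assumes "Poly_Mapping.keys e \<subseteq> {1..n}" "monom g \<in> S" "\<forall>i. Poly_Mapping.lookup g i \<le> Poly_Mapping.lookup e i"
  shows "(Poly_Mapping.single e v :: 'k::field mpoly) \<in> ideal_gen n S"
proof -
  define h where "h = Abs_poly_mapping (\<lambda>i. Poly_Mapping.lookup e i - Poly_Mapping.lookup g i)"
  have fin: "finite {i. Poly_Mapping.lookup e i - Poly_Mapping.lookup g i \<noteq> 0}"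
    by (rule finite_subset[of _ "Poly_Mapping.keys e"], auto simp: in_keys_iff)
  have lh: "Poly_Mapping.lookup h i = Poly_Mapping.lookup e i - Poly_Mapping.lookup g i" for i
    unfolding h_def using fin by simp
  have e: "e = h + g"
    by (rule poly_mapping_eqI, simp add: lookup_add lh, use assms(3) in \<open>metis le_add_diff_inverse2\<close>)
  have kh: "Poly_Mapping.keys h \<subseteq> {1..n}"
    using assms(1) by (auto simp: in_keys_iff lh)
  have r: "(Poly_Mapping.single h v :: 'k mpoly) \<in> polyring n"
    using kh by (auto simp: polyring_def)
  have "(Poly_Mapping.single e v :: 'k mpoly) = Poly_Mapping.single h v * monom g"
    by (simp add: monom_def mult_single e)
  also have "\<dots> \<in> ideal_gen n S"
    by (rule ideal_gen.mult[OF r ideal_gen.gen[OF assms(2)]])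
  finally show ?thesis .
qed

lemma sum_in_ideal:
  assumes "finite X" "\<forall>x\<in>X. f x \<in> ideal_gen n S"
  shows "sum f X \<in> ideal_gen n S"
  using assms by (induction X rule: finite_induct, auto intro: ideal_gen.zero ideal_gen.add)

lemma expand_pm: "p = (\<Sum>e\<in>Poly_Mapping.keys p. Poly_Mapping.single e (Poly_Mapping.lookup p e))"
proof (rule poly_mapping_eqI)
  fix k
  have "Poly_Mapping.lookup (\<Sum>e\<in>Poly_Mapping.keys p. Poly_Mapping.single e (Poly_Mapping.lookup p e)) k =
     (\<Sum>e\<in>Poly_Mapping.keys p. if e = k then Poly_Mapping.lookup p e else 0)"
    by (simp add: lookup_sum lookup_single when_def)
  also have "\<dots> = Poly_Mapping.lookup p k" by (simp add: sum.delta in_keys_iff)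
  finally show "Poly_Mapping.lookup p k = Poly_Mapping.lookup (\<Sum>e\<in>Poly_Mapping.keys p. Poly_Mapping.single e (Poly_Mapping.lookup p e)) k" by simp
qed

lemma quot_dim_generic:
  assumes SG: "\<forall>s\<in>S. \<exists>g\<in>G. s = monom g" and GS: "\<forall>g\<in>G. (monom g :: 'k::field mpoly) \<in> S"
    and Std: "Std = {e. Poly_Mapping.keys e \<subseteq> {1..n} \<and> (\<forall>g\<in>G. \<not> (\<forall>i. Poly_Mapping.lookup g i \<le> Poly_Mapping.lookup e i))}"
    and fin: "finite Std"
  shows "quot_dim_eq n (ideal_gen n S :: 'k mpoly set) (card Std)"
  unfolding quot_dim_eq_def
proof (intro exI[of _ "monom ` Std"] conjI allI impI ballI)
  have inj: "inj_on (monom :: _ \<Rightarrow> 'k mpoly) Std" using monom_inj inj_on_subset by blast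
  show "finite (monom ` Std :: 'k mpoly set)" using fin by simp
  show "card (monom ` Std :: 'k mpoly set) = card Std" using card_image[OF inj] .
  show "(monom ` Std :: 'k mpoly set) \<subseteq> polyring n" using Std by (auto simp: polyring_def)
  have reidx: "(\<Sum>b\<in>monom ` Std. const (c b) * b) = (\<Sum>e\<in>Std. Poly_Mapping.single e (c (monom e :: 'k mpoly)))" for c
    by (simp add: sum.reindex[OF inj])
  {
    fix c :: "'k mpoly \<Rightarrow> 'k" and b :: "'k mpoly"
    assume inI: "(\<Sum>b\<in>monom ` Std. const (c b) * b) \<in> ideal_gen n S" and b: "b \<in> monom ` Std"
    then obtain e0 where e0: "e0 \<in> Std" "b = monom e0" by blast
    let ?q = "(\<Sum>e\<in>Std. Poly_Mapping.single e (c (monom e :: 'k mpoly)))"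
    have lq: "Poly_Mapping.lookup ?q e0 = c b"
      using e0 fin by (simp add: lookup_sum lookup_single when_def sum.delta)
    show "c b = 0"
    proof (rule ccontr)
      assume "c b \<noteq> 0"
      hence "e0 \<in> Poly_Mapping.keys ?q" using lq by (simp add: in_keys_iff)
      moreover have "?q \<in> ideal_gen n S" using inI reidx by simp
      ultimately obtain g where "g \<in> G" "\<forall>i. Poly_Mapping.lookup g i \<le> Poly_Mapping.lookup e0 i"
        using ideal_keys_div[OF _ SG] by blast
      thus False using e0 Std by auto
    qed
  }
  fix p :: "'k mpoly" assume p: "p \<in> polyring n"
  let ?c = "\<lambda>b::'k mpoly. Poly_Mapping.lookup p (inv_into Std (monom :: _ \<Rightarrow> 'k mpoly) b)"
  have "(\<Sum>b\<in>monom ` Std. const (?c b) * b) = (\<Sum>e\<in>Std. Poly_Mapping.single e (Poly_Mapping.lookup p e))"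
    unfolding reidx using inj by (intro sum.cong, auto)
  also have "\<dots> = (\<Sum>e\<in>Poly_Mapping.keys p \<inter> Std. Poly_Mapping.single e (Poly_Mapping.lookup p e))"
    by (rule sum.mono_neutral_right, use fin in \<open>auto simp: in_keys_iff\<close>)
  finally have eq: "(\<Sum>b\<in>monom ` Std. const (?c b) * b) = (\<Sum>e\<in>Poly_Mapping.keys p \<inter> Std. Poly_Mapping.single e (Poly_Mapping.lookup p e))" .
  have "p = (\<Sum>e\<in>Poly_Mapping.keys p \<inter> Std. Poly_Mapping.single e (Poly_Mapping.lookup p e)) +
            (\<Sum>e\<in>Poly_Mapping.keys p - Std. Poly_Mapping.single e (Poly_Mapping.lookup p e))"
    by (subst expand_pm, rule sum.Int_Diff, simp)
  hence "p - (\<Sum>b\<in>monom ` Std. const (?c b) * b) = (\<Sum>e\<in>Poly_Mapping.keys p - Std. Poly_Mapping.single e (Poly_Mapping.lookup p e))"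
    unfolding eq by (simp add: algebra_simps)
  also have "\<dots> \<in> ideal_gen n S"
  proof (rule sum_in_ideal, simp, rule ballI)
    fix e assume e: "e \<in> Poly_Mapping.keys p - Std"
    hence ke: "Poly_Mapping.keys e \<subseteq> {1..n}" using p by (auto simp: polyring_def)
    with e Std obtain g where "g \<in> G" "\<forall>i. Poly_Mapping.lookup g i \<le> Poly_Mapping.lookup e i" by auto
    thus "Poly_Mapping.single e (Poly_Mapping.lookup p e) \<in> ideal_gen n S"
      using single_in_ideal[OF ke] GS by blast
  qed
  finally show "\<exists>c. p - (\<Sum>b\<in>monom ` Std. const (c b) * b) \<in> ideal_gen n S" by (rule exI[where x="?c"])
qed



lemma card_F:
  fixes I :: "nat set" and t d :: "nat \<Rightarrow> nat"
  assumes fI: "finite I" and td: "\<forall>i\<in>I. t i \<le> d i"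
  shows "card {f \<in> PiE I (\<lambda>i. {..<d i}). \<forall>i\<in>I. \<forall>j\<in>I. i \<noteq> j \<longrightarrow> \<not> (t i \<le> f i \<and> t j \<le> f j)}
     = (\<Prod>i\<in>I. t i) + (\<Sum>i\<in>I. (d i - t i) * (\<Prod>j\<in>I-{i}. t j))"
proof -
  define F0 where "F0 = PiE I (\<lambda>i. {..<t i})"
  define Fi where "Fi = (\<lambda>i. PiE I (\<lambda>j. if j = i then {t i..<d i} else {..<t j}))"
  have eq: "{f \<in> PiE I (\<lambda>i. {..<d i}). \<forall>i\<in>I. \<forall>j\<in>I. i \<noteq> j \<longrightarrow> \<not> (t i \<le> f i \<and> t j \<le> f j)}
     = F0 \<union> (\<Union>i\<in>I. Fi i)"
  proof (intro equalityI subsetI)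
    fix f assume f: "f \<in> {f \<in> PiE I (\<lambda>i. {..<d i}). \<forall>i\<in>I. \<forall>j\<in>I. i \<noteq> j \<longrightarrow> \<not> (t i \<le> f i \<and> t j \<le> f j)}"
    show "f \<in> F0 \<union> (\<Union>i\<in>I. Fi i)"
    proof (cases "\<exists>i\<in>I. t i \<le> f i")
      case True
      then obtain i where i: "i \<in> I" "t i \<le> f i" by blast
      have "f \<in> Fi i" using f i unfolding Fi_def by (auto simp: PiE_iff not_le)
      thus ?thesis using i by blast
    next
      case False
      hence "f \<in> F0" using f unfolding F0_def by (auto simp: PiE_iff not_le)
      thus ?thesis by blast
    qed
  next
    fix f assume "f \<in> F0 \<union> (\<Union>i\<in>I. Fi i)"
    thus "f \<in> {f \<in> PiE I (\<lambda>i. {..<d i}). \<forall>i\<in>I. \<forall>j\<in>I. i \<noteq> j \<longrightarrow> \<not> (t i \<le> f i \<and> t j \<le> f j)}"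
      unfolding F0_def Fi_def using td
      by (auto simp: PiE_iff split: if_splits) (metis leD order_less_le_trans)+
  qed
  have fin0: "finite F0" unfolding F0_def using fI by (simp add: finite_PiE)
  have fini: "\<And>i. finite (Fi i)" unfolding Fi_def using fI by (simp add: finite_PiE)
  have disj0: "F0 \<inter> (\<Union>i\<in>I. Fi i) = {}"
    unfolding F0_def Fi_def by (auto simp: PiE_iff) (metis atLeastLessThan_iff not_le)
  have disji: "\<forall>i\<in>I. \<forall>j\<in>I. i \<noteq> j \<longrightarrow> Fi i \<inter> Fi j = {}"
    unfolding Fi_def by (auto simp: PiE_iff) (metis atLeastLessThan_iff lessThan_iff not_le)
  have c0: "card F0 = (\<Prod>i\<in>I. t i)" unfolding F0_def using fI by (simp add: card_PiE)
  have ci: "card (Fi i) = (d i - t i) * (\<Prod>j\<in>I-{i}. t j)" if "i \<in> I" for i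
  proof -
    have "card (Fi i) = (\<Prod>j\<in>I. card (if j = i then {t i..<d i} else {..<t j}))"
      unfolding Fi_def using fI by (simp add: card_PiE)
    also have "\<dots> = card (if i = i then {t i..<d i} else {..<t i}) * (\<Prod>j\<in>I-{i}. card (if j = i then {t i..<d i} else {..<t j}))"
      using fI that by (rule prod.remove)
    also have "(\<Prod>j\<in>I-{i}. card (if j = i then {t i..<d i} else {..<t j})) = (\<Prod>j\<in>I-{i}. t j)"
      by (rule prod.cong, auto)
    finally show ?thesis by simp
  qed
  have "card (F0 \<union> (\<Union>i\<in>I. Fi i)) = card F0 + card (\<Union>i\<in>I. Fi i)"
    by (rule card_Un_disjoint[OF fin0 _ disj0], use fI fini in auto)
  also have "card (\<Union>i\<in>I. Fi i) = (\<Sum>i\<in>I. card (Fi i))"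
    by (rule card_UN_disjoint[OF fI], use fini disji in auto)
  also have "\<dots> = (\<Sum>i\<in>I. (d i - t i) * (\<Prod>j\<in>I-{i}. t j))"
    by (rule sum.cong, auto simp: ci)
  finally show ?thesis unfolding eq c0 .
qed


lemma card_le2_cases:
  assumes "finite A" "A \<noteq> {}" "card A \<le> 2"
  shows "(\<exists>i. A = {i}) \<or> (\<exists>i j. i \<noteq> j \<and> A = {i,j})"
proof -
  have "card A = 1 \<or> card A = 2" using assms by (cases "card A") (auto simp: card_eq_0_iff)
  thus ?thesis by (auto simp: card_1_singleton_iff card_2_iff)
qed

lemma lookup_Ex:
  assumes "finite A"
  shows "Poly_Mapping.lookup (\<Sum>i\<in>A. Poly_Mapping.single i (D i :: nat)) k = (if k \<in> A then D k else 0)"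
  using assms by (simp add: lookup_sum lookup_single when_def sum.delta)

theorem theorem1:
  fixes n a b :: nat and r :: "nat \<Rightarrow> nat" and adj :: "nat \<Rightarrow> nat \<Rightarrow> nat"
  assumes "n \<ge> 1" and "a > 0" and "b > 0"
    and "\<forall>i\<in>{1..n}. r i \<le> a"
    and "\<forall>i\<in>{1..n}. adj 0 i = r i \<and> adj i 0 = r i"
    and "\<forall>i\<in>{1..n}. \<forall>j\<in>{1..n}. i \<noteq> j \<longrightarrow> adj i j = b"
    and "\<forall>i\<in>{0..n}. adj i i = 0"
  shows "\<exists>d. quot_dim_eq n (M1 n adj :: 'k::field mpoly set) d \<and> int d = det (trunc_Q n adj)"
proof -
  note offd = assms(6) and diag0 = assms(7)
  define I where "I = {1..n}"
  define d where "d = (\<lambda>i. \<Sum>j\<in>{0..n}. adj i j)"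
  define t where "t = (\<lambda>i. d i - b)"
  define cond where "cond = (\<lambda>A. A \<noteq> {} \<and> A \<subseteq> {1..n} \<and> card A \<le> 2)"
  define Ex where "Ex = (\<lambda>A. \<Sum>i\<in>A. Poly_Mapping.single i (degA n adj A i))"
  define G where "G = {Ex A | A. cond A}"
  define S :: "'k mpoly set" where "S = {mA n adj A | A. A \<noteq> {} \<and> A \<subseteq> {1..n} \<and> card A \<le> 2}"
  have M1: "M1 n adj = ideal_gen n S" unfolding M1_def S_def ..
  have SG: "\<forall>s\<in>S. \<exists>g\<in>G. s = monom g" unfolding S_def G_def mA_def Ex_def cond_def by blast
  have GS: "\<forall>g\<in>G. (monom g :: 'k mpoly) \<in> S" unfolding S_def G_def mA_def Ex_def cond_def by blast
  define Std where "Std = {e. Poly_Mapping.keys e \<subseteq> {1..n} \<and> (\<forall>g\<in>G. \<not> (\<forall>i. Poly_Mapping.lookup g i \<le> Poly_Mapping.lookup e i))}"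
  have deg1: "degA n adj {i} i = d i" if "i \<in> I" for i
  proof -
    have "d i = adj i i + (\<Sum>j\<in>{0..n}-{i}. adj i j)" unfolding d_def
      using that I_def by (intro sum.remove, auto)
    thus ?thesis using diag0 that I_def by (simp add: degA_def)
  qed
  have deg2: "degA n adj {i,j} i = t i" if "i \<in> I" "j \<in> I" "i \<noteq> j" for i j
  proof -
    have "d i = adj i i + (\<Sum>k\<in>{0..n}-{i}. adj i k)" unfolding d_def
      using that I_def by (intro sum.remove, auto)
    also have "(\<Sum>k\<in>{0..n}-{i}. adj i k) = adj i j + (\<Sum>k\<in>{0..n}-{i}-{j}. adj i k)"
      using that I_def by (intro sum.remove, auto)
    also have "{0..n}-{i}-{j} = {0..n} - {i,j}" by auto
    finally show ?thesis using diag0 offd that I_def by (simp add: degA_def t_def)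
  qed
  have lEx: "Poly_Mapping.lookup (Ex A) k = (if k \<in> A then degA n adj A k else 0)" if "finite A" for A k
    unfolding Ex_def using lookup_Ex[OF that] .
  have charG: "(\<forall>g\<in>G. \<not> (\<forall>i. Poly_Mapping.lookup g i \<le> Poly_Mapping.lookup e i)) \<longleftrightarrow>
      (\<forall>i\<in>I. Poly_Mapping.lookup e i < d i) \<and>
      (\<forall>i\<in>I. \<forall>j\<in>I. i \<noteq> j \<longrightarrow> \<not> (t i \<le> Poly_Mapping.lookup e i \<and> t j \<le> Poly_Mapping.lookup e j))" for e
  proof
    assume H: "\<forall>g\<in>G. \<not> (\<forall>i. Poly_Mapping.lookup g i \<le> Poly_Mapping.lookup e i)"
    show "(\<forall>i\<in>I. Poly_Mapping.lookup e i < d i) \<and>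
      (\<forall>i\<in>I. \<forall>j\<in>I. i \<noteq> j \<longrightarrow> \<not> (t i \<le> Poly_Mapping.lookup e i \<and> t j \<le> Poly_Mapping.lookup e j))"
    proof (intro conjI ballI impI)
      fix i assume i: "i \<in> I"
      have "Ex {i} \<in> G" unfolding G_def cond_def using i I_def by auto
      with H obtain k where "\<not> Poly_Mapping.lookup (Ex {i}) k \<le> Poly_Mapping.lookup e k" by blast
      thus "Poly_Mapping.lookup e i < d i" using deg1[OF i] by (auto simp: lEx split: if_splits)
    next
      fix i j assume ij: "i \<in> I" "j \<in> I" "i \<noteq> j"
      have "Ex {i,j} \<in> G" unfolding G_def cond_def using ij I_def by auto
      with H obtain k where "\<not> Poly_Mapping.lookup (Ex {i,j}) k \<le> Poly_Mapping.lookup e k" by blast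
      moreover have "degA n adj {i,j} j = t j" using deg2[of j i] ij by (simp add: insert_commute)
      ultimately show "\<not> (t i \<le> Poly_Mapping.lookup e i \<and> t j \<le> Poly_Mapping.lookup e j)"
        using deg2[OF ij] by (auto simp: lEx split: if_splits)
    qed
  next
    assume H: "(\<forall>i\<in>I. Poly_Mapping.lookup e i < d i) \<and>
      (\<forall>i\<in>I. \<forall>j\<in>I. i \<noteq> j \<longrightarrow> \<not> (t i \<le> Poly_Mapping.lookup e i \<and> t j \<le> Poly_Mapping.lookup e j))"
    show "\<forall>g\<in>G. \<not> (\<forall>i. Poly_Mapping.lookup g i \<le> Poly_Mapping.lookup e i)"
    proof
      fix g assume "g \<in> G"
      then obtain A where g: "g = Ex A" and A: "cond A" unfolding G_def by blast
      have fA: "finite A" using A unfolding cond_def by (meson finite_atLeastAtMost finite_subset)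
      from card_le2_cases[OF fA] A consider (one) i where "A = {i}" | (two) i j where "i \<noteq> j" "A = {i,j}"
        unfolding cond_def by blast
      thus "\<not> (\<forall>i. Poly_Mapping.lookup g i \<le> Poly_Mapping.lookup e i)"
      proof cases
        case one
        hence i: "i \<in> I" using A unfolding cond_def I_def by auto
        have "\<not> Poly_Mapping.lookup g i \<le> Poly_Mapping.lookup e i"
          using H i deg1[OF i] by (simp add: g one lEx not_le)
        thus ?thesis by blast
      next
        case two
        hence ij: "i \<in> I" "j \<in> I" using A unfolding cond_def I_def by auto
        have dj: "degA n adj {i,j} j = t j" using deg2[of j i] ij two by (simp add: insert_commute)
        have "\<not> (Poly_Mapping.lookup g i \<le> Poly_Mapping.lookup e i \<and> Poly_Mapping.lookup g j \<le> Poly_Mapping.lookup e j)"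
          using H ij two deg2[OF ij two(1)] dj by (simp add: g lEx)
        thus ?thesis by blast
      qed
    qed
  qed
  define F where "F = {f \<in> PiE I (\<lambda>i. {..<d i}). \<forall>i\<in>I. \<forall>j\<in>I. i \<noteq> j \<longrightarrow> \<not> (t i \<le> f i \<and> t j \<le> f j)}"
  define toPM where "toPM = (\<lambda>f. Abs_poly_mapping (\<lambda>k. if k \<in> I then f k else (0::nat)))"
  have ltoPM: "Poly_Mapping.lookup (toPM f) k = (if k \<in> I then f k else 0)" for f k
  proof -
    have "finite {k. (if k \<in> I then f k else (0::nat)) \<noteq> 0}"
      by (rule finite_subset[of _ I], auto simp: I_def)
    thus ?thesis unfolding toPM_def by simp
  qed
  have finF: "finite F" unfolding F_def I_def by (simp add: finite_PiE)
  have injF: "inj_on toPM F"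
  proof (rule inj_onI)
    fix f g assume f: "f \<in> F" and g: "g \<in> F" and eq: "toPM f = toPM g"
    have "\<forall>k\<in>I. f k = g k"
      using arg_cong[OF eq, of "\<lambda>p. Poly_Mapping.lookup p"] by (auto simp: ltoPM fun_eq_iff) metis
    thus "f = g" using f g unfolding F_def by (auto intro: PiE_ext)
  qed
  have StdF: "Std = toPM ` F"
  proof (intro equalityI subsetI)
    fix e assume e: "e \<in> Std"
    hence ke: "Poly_Mapping.keys e \<subseteq> I" and ch: "\<forall>g\<in>G. \<not> (\<forall>i. Poly_Mapping.lookup g i \<le> Poly_Mapping.lookup e i)"
      unfolding Std_def I_def by auto
    define f where "f = restrict (Poly_Mapping.lookup e) I"
    have "f \<in> F" using ch unfolding charG F_def f_def by auto
    moreover have "e = toPM f"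
    proof (rule poly_mapping_eqI)
      fix k show "Poly_Mapping.lookup e k = Poly_Mapping.lookup (toPM f) k"
        using ke by (auto simp: ltoPM f_def in_keys_iff)
    qed
    ultimately show "e \<in> toPM ` F" by blast
  next
    fix e assume "e \<in> toPM ` F"
    then obtain f where f: "f \<in> F" and e: "e = toPM f" by blast
    have ke: "Poly_Mapping.keys e \<subseteq> {1..n}"
      by (auto simp: e in_keys_iff ltoPM I_def split: if_splits)
    have "(\<forall>i\<in>I. Poly_Mapping.lookup e i < d i) \<and>
      (\<forall>i\<in>I. \<forall>j\<in>I. i \<noteq> j \<longrightarrow> \<not> (t i \<le> Poly_Mapping.lookup e i \<and> t j \<le> Poly_Mapping.lookup e j))"
      using f unfolding F_def by (auto simp: e ltoPM PiE_iff)
    thus "e \<in> Std" unfolding Std_def using ke charG by blast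
  qed
  have finStd: "finite Std" using finF StdF by simp
  have cardStd: "card Std = card F" using StdF card_image[OF injF] by simp
  have qd: "quot_dim_eq n (M1 n adj :: 'k mpoly set) (card Std)"
    unfolding M1 by (rule quot_dim_generic[OF SG GS Std_def finStd])
  have cF: "card F = (\<Prod>i\<in>I. t i) + (\<Sum>i\<in>I. (d i - t i) * (\<Prod>j\<in>I-{i}. t j))"
    unfolding F_def by (rule card_F, auto simp: I_def t_def)
  have "int (card Std) = det (trunc_Q n adj)"
  proof (cases "n = 1")
    case True
    have "card Std = d 1" unfolding cardStd cF using True by (simp add: I_def t_def)
    moreover have "det (trunc_Q n adj) = int (d 1)"
      using True by (subst det_single, auto simp: trunc_Q_def d_def)
    ultimately show ?thesis by simp
  next
    case False
    hence n2: "n \<ge> 2" using assms(1) by simp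
    have bd: "b \<le> d i" if "i \<in> I" for i
    proof -
      define j where "j = (if i = 1 then 2 else (1::nat))"
      have j: "j \<in> I" "j \<noteq> i" using n2 that unfolding I_def j_def by auto
      have "adj i j \<le> d i" unfolding d_def using j I_def by (intro member_le_sum, auto)
      thus ?thesis using offd j that I_def by auto
    qed
    have cS: "card Std = (\<Prod>i\<in>I. t i) + b * (\<Sum>i\<in>I. (\<Prod>j\<in>I-{i}. t j))"
      unfolding cardStd cF sum_distrib_left using bd by (intro arg_cong2[where f="(+)"] sum.cong refl, auto simp: t_def)
    define tt where "tt = (\<lambda>k. int (t (Suc k)))"
    have TQ: "trunc_Q n adj = Mt n tt (int b)"
    proof (rule eq_matI)
      fix i j assume "i < dim_row (Mt n tt (int b))" "j < dim_col (Mt n tt (int b))"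
      hence ij: "i < n" "j < n" by (auto simp: Mt_def)
      hence "Suc i \<in> I" "Suc j \<in> I" by (auto simp: I_def)
      thus "trunc_Q n adj $$ (i, j) = Mt n tt (int b) $$ (i, j)"
        using ij bd offd I_def by (auto simp: trunc_Q_def Mt_def tt_def t_def of_nat_diff d_def simp flip: of_nat_sum)
    qed (auto simp: trunc_Q_def Mt_def)
    have IS: "I = Suc ` {..<n}" unfolding I_def by (simp add: image_Suc_lessThan)
    have p1: "(\<Prod>i\<in>I. int (t i)) = (\<Prod>k<n. tt k)"
      unfolding IS tt_def by (simp add: prod.reindex)
    have p2: "(\<Sum>i\<in>I. \<Prod>j\<in>I-{i}. int (t j)) = (\<Sum>k<n. \<Prod>j\<in>{..<n}-{k}. tt j)"
    proof -
      have "(\<Sum>i\<in>I. \<Prod>j\<in>I-{i}. int (t j)) = (\<Sum>k<n. \<Prod>j\<in>I-{Suc k}. int (t j))"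
        unfolding IS by (simp add: sum.reindex)
      also have "\<dots> = (\<Sum>k<n. \<Prod>j\<in>{..<n}-{k}. tt j)"
      proof (rule sum.cong[OF refl])
        fix k assume "k \<in> {..<n}"
        have "I - {Suc k} = Suc ` ({..<n}-{k})" unfolding IS by auto
        thus "(\<Prod>j\<in>I-{Suc k}. int (t j)) = (\<Prod>j\<in>{..<n}-{k}. tt j)"
          by (simp add: prod.reindex tt_def)
      qed
      finally show ?thesis .
    qed
    show ?thesis unfolding cS TQ det_Mt by (simp add: p1[symmetric] p2[symmetric])
  qed
  with qd show ?thesis by blast
qed

end
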